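(* There is an absolute constant $C>0$ and an algorithm with the following property. Let $S$ be a set of arms with reward distributions supported on $[0,1]$ and means $\theta_1\ge\dots\ge\theta_{|S|}$ (indexing unknown to the algorithm), where $|S|/10$ and $(|S|+K)/2$ are integers, $1\le K\le\frac23|S|$, and let $\gamma,\delta\in(0,1/2]$, $\phi\in(0,1]$. If $\theta_K-\theta_{(|S|+K)/2}\ge\phi$, then the algorithm makes at most $C\frac{|S|}{\phi^2}(\log\frac1\gamma+\log\frac1\delta)$ pulls and with probability at least $1-\delta$ outputs a set $T\subseteq S$ with $|T|=|S|/10$ such that at most $\gamma K$ arms of $T$ belong to $\{1,\dots,K\}$ (the top-$K$ arms of $S$).
   Context: Stochastic bandit model: each pull yields an independent sample from the pulled arm's unknown distribution. *)

theory Defs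
  imports "HOL-Probability.Probability"
begin

text \<open>Stochastic bandit model, stack-of-rewards formulation: the j-th pull (counting from 0)
of arm a returns the sample omega (a, j); the samples omega (a, j) are independent, and
for each arm a they are i.i.d. with law D a.\<close>

datatype 'a action = Pull 'a | Stop "'a set"

type_synonym 'a policy = "('a \<times> real) list \<Rightarrow> 'a action"

fun run :: "'a policy \<Rightarrow> ('a \<times> nat \<Rightarrow> real) \<Rightarrow> nat \<Rightarrow> ('a \<times> real) list \<Rightarrow> 'a set option" where
  "run \<pi> \<omega> n h =
     (case \<pi> h of
        Stop T \<Rightarrow> Some T
      | Pull a \<Rightarrow> (if n = 0 then None
                 else run \<pi> \<omega> (n - 1) (h @ [(a, \<omega> (a, length (filter (\<lambda>p. fst p = a) h)))])))"

declare run.simps[simp del]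

definition reward_space :: "'a set \<Rightarrow> ('a \<Rightarrow> real measure) \<Rightarrow> ('a \<times> nat \<Rightarrow> real) measure" where
  "reward_space S D = PiM (S \<times> UNIV) (\<lambda>(a, j). D a)"

definition arm_mean :: "real measure \<Rightarrow> real" where
  "arm_mean M = (\<integral>x. x \<partial>M)"

definition valid_arms :: "'a set \<Rightarrow> ('a \<Rightarrow> real measure) \<Rightarrow> bool" where
  "valid_arms S D \<longleftrightarrow> finite S \<and>
     (\<forall>a\<in>S. prob_space (D a) \<and> sets (D a) = sets borel \<and> measure (D a) {0..1} = 1)"

definition sorted_indexing :: "'a set \<Rightarrow> ('a \<Rightarrow> real measure) \<Rightarrow> (nat \<Rightarrow> 'a) \<Rightarrow> bool" where
  "sorted_indexing S D \<sigma> \<longleftrightarrow> bij_betw \<sigma> {1..card S} S \<and>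
     (\<forall>i\<in>{1..card S}. \<forall>j\<in>{1..card S}. i \<le> j \<longrightarrow> arm_mean (D (\<sigma> j)) \<le> arm_mean (D (\<sigma> i)))"

text \<open>Randomized algorithm: given S, K, gamma, delta, phi, draws a deterministic policy
(internal randomness, independent of the rewards).\<close>
type_synonym 'a algorithm = "'a set \<Rightarrow> nat \<Rightarrow> real \<Rightarrow> real \<Rightarrow> real \<Rightarrow> 'a policy pmf"

end

theory Submission imports Defs begin

definition emp :: "('a \<times> real) list \<Rightarrow> 'a \<Rightarrow> real" where
  "emp h a = sum_list (map snd (filter (\<lambda>p. fst p = a) h))"

definition rel_of :: "'a set \<Rightarrow> ('a \<Rightarrow> real) \<Rightarrow> ('a \<times> 'a) set" where
  "rel_of S e = {p \<in> S \<times> S. e (fst p) < e (snd p)}"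

definition sel :: "'a list \<Rightarrow> nat \<Rightarrow> ('a \<times> 'a) set \<Rightarrow> 'a set" where
  "sel xs k R = set (take k (sort_key (\<lambda>a. card {b. (b, a) \<in> R}) xs))"

definition enum :: "'a set \<Rightarrow> 'a list" where
  "enum S = (SOME xs. set xs = S \<and> distinct xs)"

definition pol :: "'a set \<Rightarrow> nat \<Rightarrow> 'a policy" where
  "pol S m h = (if length h < m * card S then Pull (enum S ! (length h div m))
     else Stop (sel (enum S) (card S div 10) (rel_of S (emp h))))"

lemma enum: "finite S \<Longrightarrow> set (enum S) = S \<and> distinct (enum S)"
  unfolding enum_def by (rule someI_ex) (use finite_distinct_list in blast)

lemma sorted_take_le:
  assumes "sorted (map f ys)" "distinct ys" "x \<in> set (take k ys)" "y \<in> set ys" "y \<notin> set (take k ys)"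
  shows "f x \<le> f y"
proof -
  obtain i where i: "i < length ys" "i < k" "x = ys ! i"
    using assms(3) by (auto simp: in_set_conv_nth)
  obtain j where j: "j < length ys" "y = ys ! j"
    using assms(4) by (auto simp: in_set_conv_nth)
  have "\<not> j < k" using assms(5) j by (auto simp: in_set_conv_nth intro!: exI[of _ j])
  hence "i \<le> j" using i by auto
  thus ?thesis using assms(1) i j by (auto simp: sorted_iff_nth_mono)
qed

lemma sel_props:
  fixes e :: "'a \<Rightarrow> real"
  assumes S: "finite S" and xs: "set xs = S" "distinct xs" and k: "k \<le> card S"
  defines "T \<equiv> sel xs k (rel_of S e)"
  shows "T \<subseteq> S" "card T = k" "\<And>x y. x \<in> T \<Longrightarrow> y \<in> S - T \<Longrightarrow> e x \<le> e y"
proof -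
  define key where "key = (\<lambda>a. card {b. (b, a) \<in> rel_of S e})"
  define ys where "ys = sort_key key xs"
  have ys: "set ys = S" "distinct ys" "sorted (map key ys)" "length ys = card S"
    using xs by (auto simp: ys_def distinct_card)
  have T: "T = set (take k ys)" unfolding T_def sel_def ys_def key_def ..
  show "T \<subseteq> S" using ys T by (auto dest: in_set_takeD)
  show "card T = k" using ys T k by (simp add: distinct_card)
  fix x y assume x: "x \<in> T" and y: "y \<in> S - T"
  have "key x \<le> key y" using sorted_take_le[OF ys(3) ys(2), of x k y] x y T ys by auto
  show "e x \<le> e y"
  proof (rule ccontr)
    assume "\<not> e x \<le> e y"
    hence lt: "e y < e x" by simp
    have xS: "x \<in> S" using x \<open>T \<subseteq> S\<close> by auto
    have "{b. (b, y) \<in> rel_of S e} \<subset> {b. (b, x) \<in> rel_of S e}"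
      using lt y xS by (auto simp: rel_of_def)
    moreover have "finite {b. (b, x) \<in> rel_of S e}"
      by (rule finite_subset[OF _ S]) (auto simp: rel_of_def)
    ultimately have "key y < key x" unfolding key_def by (rule psubset_card_mono[rotated])
    thus False using \<open>key x \<le> key y\<close> by simp
  qed
qed

definition hist :: "'a list \<Rightarrow> nat \<Rightarrow> ('a \<times> nat \<Rightarrow> real) \<Rightarrow> nat \<Rightarrow> ('a \<times> real) list" where
  "hist xs m \<omega> k = map (\<lambda>i. (xs ! (i div m), \<omega> (xs ! (i div m), i mod m))) [0..<k]"

lemma div_eq_iff_aux:
  fixes i k m :: nat
  assumes "i < k" "0 < m"
  shows "(i div m = k div m) \<longleftrightarrow> k - k mod m \<le> i"
proof -
  have e: "k - k mod m = m * (k div m)" by (simp add: minus_mod_eq_mult_div)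
  show ?thesis
  proof
    assume "i div m = k div m"
    thus "k - k mod m \<le> i" using e by (metis div_times_less_eq_dividend mult.commute)
  next
    assume "k - k mod m \<le> i"
    hence "(m * (k div m)) div m \<le> i div m" using e by (metis div_le_mono)
    hence "k div m \<le> i div m" using assms by simp
    moreover have "i div m \<le> k div m" using assms by (simp add: div_le_mono)
    ultimately show "i div m = k div m" by simp
  qed
qed

lemma filter_ge_upt: "filter (\<lambda>i. c \<le> i) [0..<k] = [c..<(k::nat)]"
  by (induction k) auto

lemma hist_count:
  assumes "distinct xs" "0 < m" "k < m * length xs"
  shows "length (filter (\<lambda>p. fst p = xs ! (k div m)) (hist xs m \<omega> k)) = k mod m"
proof -
  have kd: "k div m < length xs" using assms by (simp add: div_less_iff_less_mult mult.commute)
  have "length (filter (\<lambda>p. fst p = xs ! (k div m)) (hist xs m \<omega> k))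
      = length (filter (\<lambda>i. xs ! (i div m) = xs ! (k div m)) [0..<k])"
    by (simp add: hist_def filter_map o_def)
  also have "filter (\<lambda>i. xs ! (i div m) = xs ! (k div m)) [0..<k] = filter (\<lambda>i. k - k mod m \<le> i) [0..<k]"
  proof (rule filter_cong[OF refl])
    fix i assume "i \<in> set [0..<k]"
    hence i: "i < k" by simp
    have "i div m \<le> k div m" using i by (simp add: div_le_mono)
    hence "i div m < length xs" using kd by simp
    hence "(xs ! (i div m) = xs ! (k div m)) = (i div m = k div m)"
      using kd assms(1) by (simp add: nth_eq_iff_index_eq)
    thus "(xs ! (i div m) = xs ! (k div m)) = (k - k mod m \<le> i)"
      using div_eq_iff_aux[OF i assms(2)] by simp
  qed
  also have "filter (\<lambda>i. k - k mod m \<le> i) [0..<k] = [k - k mod m..<k]"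
    by (rule filter_ge_upt)
  finally show ?thesis using mod_less_eq_dividend[of k m] by simp
qed

lemma set_div_eq:
  fixes m p n :: nat
  assumes "0 < m" "p < n"
  shows "{i. i < m * n \<and> i div m = p} = {0 + p * m..<m + p * m}"
proof -
  have "i < m * n \<and> i div m = p \<longleftrightarrow> p * m \<le> i \<and> i < m + p * m" for i
  proof
    assume a: "i < m * n \<and> i div m = p"
    have "i div m * m \<le> i" by (rule div_times_less_eq_dividend)
    moreover have "i < m + i div m * m" using assms(1) by (rule dividend_less_div_times)
    ultimately show "p * m \<le> i \<and> i < m + p * m" using a by simp
  next
    assume a: "p * m \<le> i \<and> i < m + p * m"
    have "i div m = p" by (rule div_nat_eqI) (use a in \<open>simp_all add: mult.commute\<close>)
    moreover have "m + p * m \<le> m * n"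
    proof -
      have "Suc p \<le> n" using assms(2) by simp
      hence "Suc p * m \<le> n * m" by (rule mult_le_mono1)
      thus ?thesis by (simp add: mult.commute)
    qed
    ultimately show "i < m * n \<and> i div m = p" using a by simp
  qed
  thus ?thesis unfolding set_eq_iff atLeastLessThan_iff mem_Collect_eq add_0 by blast
qed

lemma emp_hist:
  assumes "distinct xs" "0 < m" "p < length xs"
  shows "emp (hist xs m \<omega> (m * length xs)) (xs ! p) = (\<Sum>j<m. \<omega> (xs ! p, j))"
proof -
  let ?N = "m * length xs"
  have "emp (hist xs m \<omega> ?N) (xs ! p)
     = sum_list (map (\<lambda>i. \<omega> (xs ! (i div m), i mod m)) (filter (\<lambda>i. xs ! (i div m) = xs ! p) [0..<?N]))"
    by (simp add: emp_def hist_def filter_map o_def)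
  also have "filter (\<lambda>i. xs ! (i div m) = xs ! p) [0..<?N] = filter (\<lambda>i. i div m = p) [0..<?N]"
  proof (rule filter_cong[OF refl])
    fix i assume "i \<in> set [0..<?N]"
    hence "i div m < length xs" using assms by (simp add: div_less_iff_less_mult mult.commute)
    thus "(xs ! (i div m) = xs ! p) = (i div m = p)"
      using assms by (simp add: nth_eq_iff_index_eq)
  qed
  also have "sum_list (map (\<lambda>i. \<omega> (xs ! (i div m), i mod m)) (filter (\<lambda>i. i div m = p) [0..<?N]))
     = (\<Sum>i\<in>{i. i < ?N \<and> i div m = p}. \<omega> (xs ! (i div m), i mod m))"
    by (subst sum_list_distinct_conv_sum_set) (auto intro!: sum.cong)
  also have "\<dots> = (\<Sum>i\<in>{0 + p * m..<m + p * m}. \<omega> (xs ! (i div m), i mod m))"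
    using set_div_eq[OF assms(2,3)] by simp
  also have "\<dots> = (\<Sum>j\<in>{0..<m}. \<omega> (xs ! ((j + p * m) div m), (j + p * m) mod m))"
    by (rule sum.shift_bounds_nat_ivl)
  also have "\<dots> = (\<Sum>j<m. \<omega> (xs ! p, j))"
    using assms(2) by (auto intro!: sum.cong simp: atLeast0LessThan)
  finally show ?thesis .
qed

lemma run_pol:
  assumes S: "finite S" and m: "0 < m"
  shows "k \<le> m * card S \<Longrightarrow> m * card S - k \<le> d \<Longrightarrow>
    run (pol S m) \<omega> d (hist (enum S) m \<omega> k)
    = Some (sel (enum S) (card S div 10) (rel_of S (emp (hist (enum S) m \<omega> (m * card S)))))"
proof (induction "m * card S - k" arbitrary: k d)
  case 0
  hence k: "k = m * card S" by simp
  show ?case by (subst run.simps) (simp add: pol_def hist_def k)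
next
  case (Suc r)
  define xs where "xs = enum S"
  have xs: "set xs = S" "distinct xs" using enum[OF S] by (auto simp: xs_def)
  have len: "length xs = card S" using xs by (metis distinct_card)
  have k: "k < m * card S" using Suc by simp
  obtain d' where d: "d = Suc d'" using Suc by (cases d) auto
  have IH: "run (pol S m) \<omega> d' (hist xs m \<omega> (Suc k))
    = Some (sel xs (card S div 10) (rel_of S (emp (hist xs m \<omega> (m * card S)))))"
    using Suc.hyps(1)[of "Suc k" d'] Suc.hyps(2) Suc.prems d k unfolding xs_def by simp
  have lh: "length (hist xs m \<omega> k) = k" by (simp add: hist_def)
  have hs: "hist xs m \<omega> k @ [(xs ! (k div m), \<omega> (xs ! (k div m), k mod m))] = hist xs m \<omega> (Suc k)"
    by (simp add: hist_def)
  have cnt: "length (filter (\<lambda>p. fst p = xs ! (k div m)) (hist xs m \<omega> k)) = k mod m"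
    using hist_count[OF xs(2) m, of k \<omega>] k len by simp
  have pl: "pol S m (hist xs m \<omega> k) = Pull (xs ! (k div m))"
    using k lh unfolding pol_def xs_def by simp
  have "run (pol S m) \<omega> d (hist xs m \<omega> k) = run (pol S m) \<omega> d' (hist xs m \<omega> (Suc k))"
    apply (subst run.simps)
    unfolding pl d using cnt hs by simp
  thus ?case using IH unfolding xs_def by simp
qed

lemma sets_Collect_finite_pred:
  assumes I: "finite I" and Q: "\<And>i. i \<in> I \<Longrightarrow> {\<omega>\<in>space M. Q i \<omega>} \<in> sets M"
  shows "{\<omega>\<in>space M. P {i\<in>I. Q i \<omega>}} \<in> sets M"
proof -
  have eq: "{\<omega>\<in>space M. P {i\<in>I. Q i \<omega>}} =
    {\<omega>\<in>space M. \<exists>B\<in>{B. B \<subseteq> I \<and> P B}. \<forall>i\<in>I. (Q i \<omega> \<longleftrightarrow> i \<in> B)}"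
  proof (intro set_eqI iffI)
    fix \<omega> assume "\<omega> \<in> {\<omega>\<in>space M. P {i\<in>I. Q i \<omega>}}"
    thus "\<omega> \<in> {\<omega>\<in>space M. \<exists>B\<in>{B. B \<subseteq> I \<and> P B}. \<forall>i\<in>I. (Q i \<omega> \<longleftrightarrow> i \<in> B)}"
      by (intro CollectI conjI bexI[of _ "{i\<in>I. Q i \<omega>}"]) auto
  next
    fix \<omega> assume "\<omega> \<in> {\<omega>\<in>space M. \<exists>B\<in>{B. B \<subseteq> I \<and> P B}. \<forall>i\<in>I. (Q i \<omega> \<longleftrightarrow> i \<in> B)}"
    then obtain B where B: "\<omega> \<in> space M" "B \<subseteq> I" "P B" "\<forall>i\<in>I. (Q i \<omega> \<longleftrightarrow> i \<in> B)" by auto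
    hence "{i\<in>I. Q i \<omega>} = B" by auto
    thus "\<omega> \<in> {\<omega>\<in>space M. P {i\<in>I. Q i \<omega>}}" using B by auto
  qed
  have "{\<omega>\<in>space M. \<forall>i\<in>I. (Q i \<omega> \<longleftrightarrow> i \<in> B)} \<in> sets M" for B
  proof (rule sets.sets_Collect_finite_All[OF _ I])
    fix i assume i: "i \<in> I"
    show "{\<omega>\<in>space M. Q i \<omega> = (i \<in> B)} \<in> sets M"
    proof (cases "i \<in> B")
      case True thus ?thesis using Q[OF i] by simp
    next
      case False
      hence "{\<omega>\<in>space M. Q i \<omega> = (i \<in> B)} = space M - {\<omega>\<in>space M. Q i \<omega>}" by auto
      thus ?thesis using Q[OF i] by auto
    qed
  qed
  moreover have "finite {B. B \<subseteq> I \<and> P B}" using I by simp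
  ultimately show ?thesis unfolding eq by (intro sets.sets_Collect_finite_Ex) auto
qed

lemma (in prob_space) count_markov:
  assumes A: "finite A" and ev: "\<And>a. a \<in> A \<Longrightarrow> {\<omega>\<in>space M. Q a \<omega>} \<in> events"
    and pr: "\<And>a. a \<in> A \<Longrightarrow> prob {\<omega>\<in>space M. Q a \<omega>} \<le> p" and c: "0 < c"
  shows "prob {\<omega>\<in>space M. c \<le> real (card {a\<in>A. Q a \<omega>})} \<le> real (card A) * p / c"
proof -
  define u where "u = (\<lambda>\<omega>. \<Sum>a\<in>A. indicator {\<omega>\<in>space M. Q a \<omega>} \<omega> :: real)"
  have cu: "real (card {a\<in>A. Q a \<omega>}) = u \<omega>" if "\<omega> \<in> space M" for \<omega>
  proof -
    have "u \<omega> = (\<Sum>a\<in>A. if Q a \<omega> then 1 else 0)"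
      unfolding u_def using that by (intro sum.cong) (auto simp: indicator_def)
    also have "\<dots> = real (card {a\<in>A. Q a \<omega>})"
      using A by (simp add: sum.If_cases Int_def conj_commute)
    finally show ?thesis ..
  qed
  have ii: "integrable M (indicator {\<omega>\<in>space M. Q a \<omega>} :: _ \<Rightarrow> real)" if "a \<in> A" for a
    by (rule integrable_real_indicator) (auto simp: ev that less_top[symmetric])
  have int: "integrable M u" unfolding u_def
    using ii by (auto intro!: Bochner_Integration.integrable_sum)
  have "integral\<^sup>L M u = (\<Sum>a\<in>A. prob {\<omega>\<in>space M. Q a \<omega>})"
    unfolding u_def
    by (subst Bochner_Integration.integral_sum) (auto intro!: ii simp: ev)
  also have "\<dots> \<le> (\<Sum>a\<in>A. p)" using pr by (intro sum_mono) auto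
  finally have I: "integral\<^sup>L M u \<le> real (card A) * p" by simp
  have "{\<omega>\<in>space M. c \<le> real (card {a\<in>A. Q a \<omega>})} = {\<omega>\<in>space M. u \<omega> \<ge> c}"
    using cu by auto
  also have "prob \<dots> \<le> integral\<^sup>L M u / c"
    by (rule integral_Markov_inequality_measure[OF int sets.top]) (auto simp: u_def c intro!: sum_nonneg)
  also have "\<dots> \<le> real (card A) * p / c" using I c by (simp add: divide_right_mono)
  finally show ?thesis .
qed

lemma arm_facts:
  assumes V: "valid_arms S D" and a: "a \<in> S" and m: "0 < m"
  shows "prob_space (reward_space S D)"
    and "(\<lambda>\<omega>. \<Sum>j<m. \<omega> (a, j)) \<in> borel_measurable (reward_space S D)"
    and "0 \<le> \<epsilon> \<Longrightarrow> measure (reward_space S D) {\<omega>\<in>space (reward_space S D).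
           (\<Sum>j<m. \<omega> (a, j)) \<le> real m * arm_mean (D a) - \<epsilon>} \<le> exp (-2 * \<epsilon>\<^sup>2 / real m)"
    and "0 \<le> \<epsilon> \<Longrightarrow> measure (reward_space S D) {\<omega>\<in>space (reward_space S D).
           (\<Sum>j<m. \<omega> (a, j)) \<ge> real m * arm_mean (D a) + \<epsilon>} \<le> exp (-2 * \<epsilon>\<^sup>2 / real m)"
proof -
  define \<Omega> where "\<Omega> = reward_space S D"
  define MM where "MM = (\<lambda>(b::'a, j::nat). D b)"
  have \<Omega>: "\<Omega> = PiM (S \<times> UNIV) MM" unfolding \<Omega>_def reward_space_def MM_def ..
  have Da: "prob_space (D b)" "sets (D b) = sets borel" "measure (D b) {0..1} = 1" if "b \<in> S" for b
    using V that unfolding valid_arms_def by auto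
  have MMp: "prob_space (MM i)" if "i \<in> S \<times> UNIV" for i
    using that Da unfolding MM_def by auto
  show ps: "prob_space (reward_space S D)"
    unfolding \<Omega>_def[symmetric] \<Omega> by (rule prob_space_PiM) (use MMp in auto)
  interpret P: prob_space \<Omega> using ps \<Omega>_def by simp
  define X where "X = (\<lambda>j (\<omega>::'a \<times> nat \<Rightarrow> real). \<omega> (a, j))"
  have Xm: "X j \<in> measurable \<Omega> (D a)" for j
  proof -
    have "(\<lambda>x. x (a, j)) \<in> measurable \<Omega> (MM (a, j))"
      unfolding \<Omega> by (rule measurable_component_singleton) (use a in auto)
    thus ?thesis by (simp add: X_def MM_def)
  qed
  have Xb: "X j \<in> borel_measurable \<Omega>" for j
    using Xm[of j] measurable_cong_sets[OF refl Da(2)[OF a]] by blast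
  show "(\<lambda>\<omega>. \<Sum>j<m. \<omega> (a, j)) \<in> borel_measurable (reward_space S D)"
    using Xb unfolding \<Omega>_def X_def by (intro borel_measurable_sum) auto
  have dX: "distr \<Omega> borel (X j) = D a" for j
  proof -
    have "distr \<Omega> borel (X j) = distr \<Omega> (MM (a, j)) (\<lambda>\<omega>. \<omega> (a, j))"
      by (rule distr_cong) (use Da[OF a] in \<open>auto simp: MM_def X_def\<close>)
    also have "\<dots> = MM (a, j)" unfolding \<Omega>
      by (rule distr_PiM_component) (use MMp a in auto)
    finally show ?thesis by (simp add: MM_def)
  qed
  have indep: "P.indep_vars (\<lambda>_. borel) X {..<m}"
  proof (subst P.indep_vars_iff_distr_eq_PiM)
    show "{..<m} \<noteq> {}" using m by auto
    show "X j \<in> measurable \<Omega> borel" for j using Xb[of j] by simp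
    have "distr \<Omega> (PiM {..<m} (\<lambda>_. borel)) (\<lambda>x. \<lambda>j\<in>{..<m}. X j x)
        = distr \<Omega> (PiM {..<m} (\<lambda>i. MM ((\<lambda>j. (a, j)) i))) (\<lambda>\<omega>. \<lambda>n\<in>{..<m}. \<omega> ((\<lambda>j. (a, j)) n))"
      by (rule distr_cong) (use Da[OF a] in \<open>auto simp: MM_def X_def intro!: sets_PiM_cong\<close>)
    also have "\<dots> = PiM {..<m} (\<lambda>i. MM ((\<lambda>j. (a, j)) i))" unfolding \<Omega>
      by (rule distr_PiM_reindex) (use MMp a in \<open>auto simp: inj_on_def\<close>)
    also have "\<dots> = PiM {..<m} (\<lambda>j. distr \<Omega> borel (X j))"
      by (rule PiM_cong) (auto simp: dX MM_def)
    finally show "distr \<Omega> (PiM {..<m} (\<lambda>_. borel)) (\<lambda>x. \<lambda>j\<in>{..<m}. X j x)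
        = PiM {..<m} (\<lambda>j. distr \<Omega> borel (X j))" .
  qed
  have dXa: "distr \<Omega> (D a) (X j) = D a" for j
    using dX[of j] distr_cong[OF refl Da(2)[OF a], where f="X j" and g="X j"] by simp
  have AE: "AE x in \<Omega>. X j x \<in> {0..1}" for j
  proof -
    interpret Q: prob_space "D a" using Da[OF a] by simp
    have "AE x in D a. x \<in> {0..1}" by (rule Q.AE_prob_1) (use Da[OF a] in simp)
    then have "AE x in distr \<Omega> (D a) (X j). x \<in> {0..1}" by (subst dXa)
    thus ?thesis by (rule AE_distrD[OF Xm])
  qed
  have EX: "P.expectation (X j) = arm_mean (D a)" for j
  proof -
    have "arm_mean (D a) = (\<integral>x. x \<partial>distr \<Omega> (D a) (X j))"
      by (subst dXa) (simp add: arm_mean_def)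
    also have "\<dots> = P.expectation (X j)"
    proof (rule integral_distr[OF Xm])
      show "(\<lambda>x. x) \<in> borel_measurable (D a)"
        by (rule measurable_ident_sets[OF Da(2)[OF a]])
    qed
    finally show ?thesis by simp
  qed
  interpret H: Hoeffding_ineq \<Omega> "{..<m}" X "\<lambda>_. 0" "\<lambda>_. 1" "real m * arm_mean (D a)"
  proof unfold_locales
    show "finite {..<m}" by simp
    show "P.indep_vars (\<lambda>_. borel) X {..<m}" by (rule indep)
    show "AE x in \<Omega>. X i x \<in> {0..1}" for i by (rule AE)
    show "real m * arm_mean (D a) \<equiv> \<Sum>i<m. P.expectation (X i)" by (simp add: EX)
  qed
  have sq: "(\<Sum>i<m. ((1::real) - 0)\<^sup>2) = real m" by simp
  show "0 \<le> \<epsilon> \<Longrightarrow> measure (reward_space S D) {\<omega>\<in>space (reward_space S D).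
           (\<Sum>j<m. \<omega> (a, j)) \<le> real m * arm_mean (D a) - \<epsilon>} \<le> exp (-2 * \<epsilon>\<^sup>2 / real m)"
    using H.Hoeffding_ineq_le[of \<epsilon>] m unfolding sq \<Omega>_def X_def by simp
  show "0 \<le> \<epsilon> \<Longrightarrow> measure (reward_space S D) {\<omega>\<in>space (reward_space S D).
           (\<Sum>j<m. \<omega> (a, j)) \<ge> real m * arm_mean (D a) + \<epsilon>} \<le> exp (-2 * \<epsilon>\<^sup>2 / real m)"
    using H.Hoeffding_ineq_ge[of \<epsilon>] m unfolding sq \<Omega>_def X_def by simp
qed

lemma budget:
  fixes \<gamma> \<delta> \<phi> :: real and n :: nat
  assumes g: "0 < \<gamma>" "\<gamma> \<le> 1/2" and d: "0 < \<delta>" "\<delta> \<le> 1/2" and p: "0 < \<phi>" "\<phi> \<le> 1"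
  shows "real (nat \<lceil>2 * ln (16 / (\<gamma> * \<delta>)) / \<phi>\<^sup>2\<rceil>) * real n \<le> 7 * real n / \<phi>\<^sup>2 * (ln (1/\<gamma>) + ln (1/\<delta>))"
proof -
  define L where "L = ln (1/\<gamma>) + ln (1/\<delta>)"
  have l16: "ln (16 / (\<gamma> * \<delta>)) = ln 16 + L"
    using g d by (simp add: L_def ln_div ln_mult)
  have "ln (2::real) \<le> ln (1/\<gamma>)" using g by (intro ln_mono) (auto simp: field_simps)
  moreover have "ln (2::real) \<le> ln (1/\<delta>)" using d by (intro ln_mono) (auto simp: field_simps)
  ultimately have L2: "2 * ln 2 \<le> L" unfolding L_def by simp
  have ln16: "ln (16::real) = 4 * ln 2"
    using ln_realpow[of 2 4] by simp
  have ln2: "2/3 \<le> ln (2::real)" by (rule ln2_ge_two_thirds)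
  have Lpos: "0 < L" using L2 ln2 by simp
  have phi2: "0 < \<phi>\<^sup>2" "\<phi>\<^sup>2 \<le> 1" using p by (auto simp: power_le_one)
  have "real (nat \<lceil>2 * ln (16 / (\<gamma> * \<delta>)) / \<phi>\<^sup>2\<rceil>) \<le> 2 * ln (16 / (\<gamma> * \<delta>)) / \<phi>\<^sup>2 + 1"
  proof -
    have "0 \<le> 2 * ln (16 / (\<gamma> * \<delta>)) / \<phi>\<^sup>2" using l16 ln16 ln2 Lpos phi2 by simp
    thus ?thesis by linarith
  qed
  also have "\<dots> \<le> 2 * ln (16 / (\<gamma> * \<delta>)) / \<phi>\<^sup>2 + 1 / \<phi>\<^sup>2"
    using phi2 by (simp add: le_divide_eq)
  also have "\<dots> = (2 * (4 * ln 2 + L) + 1) / \<phi>\<^sup>2" using l16 ln16 by (simp add: add_divide_distrib)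
  also have "\<dots> \<le> 7 * L / \<phi>\<^sup>2"
    using phi2 L2 ln2 by (intro divide_right_mono) auto
  finally have "real (nat \<lceil>2 * ln (16 / (\<gamma> * \<delta>)) / \<phi>\<^sup>2\<rceil>) \<le> 7 * L / \<phi>\<^sup>2" .
  hence "real (nat \<lceil>2 * ln (16 / (\<gamma> * \<delta>)) / \<phi>\<^sup>2\<rceil>) * real n \<le> 7 * L / \<phi>\<^sup>2 * real n"
    by (rule mult_right_mono) simp
  thus ?thesis by (simp add: L_def field_simps)
qed

lemma pbound:
  fixes \<gamma> \<delta> \<phi> :: real
  assumes g: "0 < \<gamma>" "\<gamma> \<le> 1/2" and d: "0 < \<delta>" "\<delta> \<le> 1/2" and p: "0 < \<phi>" "\<phi> \<le> 1"
  defines "m \<equiv> nat \<lceil>2 * ln (16 / (\<gamma> * \<delta>)) / \<phi>\<^sup>2\<rceil>"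
  shows "0 < m" "exp (-2 * (real m * \<phi> / 2)\<^sup>2 / real m) \<le> \<gamma> * \<delta> / 16"
proof -
  have gd: "0 < \<gamma> * \<delta>" "\<gamma> * \<delta> \<le> 1" using g d by (auto simp: mult_le_one)
  have lpos: "0 < ln (16 / (\<gamma> * \<delta>))" using gd by (simp add: field_simps)
  have phi2: "0 < \<phi>\<^sup>2" using p by simp
  have mge: "2 * ln (16 / (\<gamma> * \<delta>)) / \<phi>\<^sup>2 \<le> real m" unfolding m_def by linarith
  moreover have "0 < 2 * ln (16 / (\<gamma> * \<delta>)) / \<phi>\<^sup>2" using lpos phi2 by simp
  ultimately show mpos: "0 < m" by linarith
  have "-2 * (real m * \<phi> / 2)\<^sup>2 / real m = - (real m * \<phi>\<^sup>2 / 2)"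
    using mpos by (simp add: power2_eq_square field_simps)
  also have "\<dots> \<le> - ln (16 / (\<gamma> * \<delta>))"
    using mge phi2 by (simp add: field_simps)
  finally have "exp (-2 * (real m * \<phi> / 2)\<^sup>2 / real m) \<le> exp (- ln (16 / (\<gamma> * \<delta>)))" by simp
  also have "\<dots> = \<gamma> * \<delta> / 16" using gd by (simp add: exp_minus)
  finally show "exp (-2 * (real m * \<phi> / 2)\<^sup>2 / real m) \<le> \<gamma> * \<delta> / 16" .
qed

lemma rel_of_cong: "(\<And>a. a \<in> S \<Longrightarrow> e a = e' a) \<Longrightarrow> rel_of S e = rel_of S e'"
  unfolding rel_of_def by auto

lemma key_claim:
  fixes e :: "'a \<Rightarrow> real"
  assumes T: "T \<subseteq> S" "card T = k" "finite S" and ord: "\<And>x y. x \<in> T \<Longrightarrow> y \<in> S - T \<Longrightarrow> e x \<le> e y"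
    and B: "B \<subseteq> S" and lt: "real (card {b\<in>B. t < e b}) < real (card B) - real k"
  shows "T \<inter> Top \<subseteq> {a\<in>Top. e a \<le> t}"
proof
  fix x assume x: "x \<in> T \<inter> Top"
  show "x \<in> {a\<in>Top. e a \<le> t}"
  proof (rule ccontr)
    assume "x \<notin> {a\<in>Top. e a \<le> t}"
    hence xt: "t < e x" using x by auto
    have sub: "B - T \<subseteq> {b\<in>B. t < e b}"
    proof
      fix y assume y: "y \<in> B - T"
      hence "e x \<le> e y" using ord[of x y] x B by auto
      thus "y \<in> {b\<in>B. t < e b}" using xt y by auto
    qed
    have fB: "finite B" using B T(3) finite_subset by auto
    have "card B \<le> card ((B - T) \<union> T)" using fB T(1,3) finite_subset
      by (intro card_mono) auto
    also have "\<dots> \<le> card (B - T) + card T" by (rule card_Un_le)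
    also have "card (B - T) \<le> card {b\<in>B. t < e b}" using sub fB by (intro card_mono) auto
    finally have "card B \<le> card {b\<in>B. t < e b} + k" using T(2) by simp
    thus False using lt by linarith
  qed
qed

theorem mainTheorem7:
  "\<exists>C::real. C > 0 \<and> (\<exists>alg :: 'a algorithm.
     \<forall>(S :: 'a set) (D :: 'a \<Rightarrow> real measure) (\<sigma> :: nat \<Rightarrow> 'a) (K :: nat) (\<gamma>::real) (\<delta>::real) (\<phi>::real).
       valid_arms S D \<longrightarrow> sorted_indexing S D \<sigma> \<longrightarrow>
       10 dvd card S \<longrightarrow> even (card S + K) \<longrightarrow>
       1 \<le> K \<longrightarrow> real K \<le> 2/3 * real (card S) \<longrightarrow>
       0 < \<gamma> \<longrightarrow> \<gamma> \<le> 1/2 \<longrightarrow> 0 < \<delta> \<longrightarrow> \<delta> \<le> 1/2 \<longrightarrow> 0 < \<phi> \<longrightarrow> \<phi> \<le> 1 \<longrightarrow>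
       arm_mean (D (\<sigma> K)) - arm_mean (D (\<sigma> ((card S + K) div 2))) \<ge> \<phi> \<longrightarrow>
       (let N = nat \<lfloor>C * real (card S) / \<phi>\<^sup>2 * (ln (1/\<gamma>) + ln (1/\<delta>))\<rfloor>;
            \<Omega> = reward_space S D
        in (\<forall>\<pi>\<in>set_pmf (alg S K \<gamma> \<delta> \<phi>). \<forall>\<omega>\<in>space \<Omega>. run \<pi> \<omega> N [] \<noteq> None) \<and>
           measure_pmf.expectation (alg S K \<gamma> \<delta> \<phi>)
             (\<lambda>\<pi>. measure \<Omega> {\<omega>\<in>space \<Omega>. \<exists>T. run \<pi> \<omega> N [] = Some T \<and> T \<subseteq> S \<and>
                    card T = card S div 10 \<and>
                    real (card (T \<inter> \<sigma> ` {1..K})) \<le> \<gamma> * real K})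
             \<ge> 1 - \<delta>))"
proof -
  define mm where "mm = (\<lambda>\<gamma> \<delta> \<phi>::real. nat \<lceil>2 * ln (16 / (\<gamma> * \<delta>)) / \<phi>\<^sup>2\<rceil>)"
  define alg :: "'a algorithm" where "alg = (\<lambda>S K \<gamma> \<delta> \<phi>. return_pmf (pol S (mm \<gamma> \<delta> \<phi>)))"
  show ?thesis
  proof (rule exI[of _ 7], rule conjI)
    show "(0::real) < 7" by simp
  next
    show "\<exists>alg :: 'a algorithm.
     \<forall>(S :: 'a set) (D :: 'a \<Rightarrow> real measure) (\<sigma> :: nat \<Rightarrow> 'a) (K :: nat) (\<gamma>::real) (\<delta>::real) (\<phi>::real).
       valid_arms S D \<longrightarrow> sorted_indexing S D \<sigma> \<longrightarrow>
       10 dvd card S \<longrightarrow> even (card S + K) \<longrightarrow>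
       1 \<le> K \<longrightarrow> real K \<le> 2/3 * real (card S) \<longrightarrow>
       0 < \<gamma> \<longrightarrow> \<gamma> \<le> 1/2 \<longrightarrow> 0 < \<delta> \<longrightarrow> \<delta> \<le> 1/2 \<longrightarrow> 0 < \<phi> \<longrightarrow> \<phi> \<le> 1 \<longrightarrow>
       arm_mean (D (\<sigma> K)) - arm_mean (D (\<sigma> ((card S + K) div 2))) \<ge> \<phi> \<longrightarrow>
       (let N = nat \<lfloor>7 * real (card S) / \<phi>\<^sup>2 * (ln (1/\<gamma>) + ln (1/\<delta>))\<rfloor>;
            \<Omega> = reward_space S D
        in (\<forall>\<pi>\<in>set_pmf (alg S K \<gamma> \<delta> \<phi>). \<forall>\<omega>\<in>space \<Omega>. run \<pi> \<omega> N [] \<noteq> None) \<and>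
           measure_pmf.expectation (alg S K \<gamma> \<delta> \<phi>)
             (\<lambda>\<pi>. measure \<Omega> {\<omega>\<in>space \<Omega>. \<exists>T. run \<pi> \<omega> N [] = Some T \<and> T \<subseteq> S \<and>
                    card T = card S div 10 \<and>
                    real (card (T \<inter> \<sigma> ` {1..K})) \<le> \<gamma> * real K})
             \<ge> 1 - \<delta>)"
    proof (rule exI[of _ alg], intro allI impI)
      fix S :: "'a set" and D :: "'a \<Rightarrow> real measure" and \<sigma> :: "nat \<Rightarrow> 'a" and K :: nat
        and \<gamma> \<delta> \<phi> :: real
      assume V: "valid_arms S D" and sI: "sorted_indexing S D \<sigma>" and d10: "10 dvd card S"
        and ev: "even (card S + K)" and K1: "1 \<le> K" and K2: "real K \<le> 2/3 * real (card S)"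
        and g0: "0 < \<gamma>" and g1: "\<gamma> \<le> 1/2" and d0: "0 < \<delta>" and d1: "\<delta> \<le> 1/2"
        and p0: "0 < \<phi>" and p1: "\<phi> \<le> 1"
        and gap: "arm_mean (D (\<sigma> K)) - arm_mean (D (\<sigma> ((card S + K) div 2))) \<ge> \<phi>"
      define n where "n = card S"
      define m where "m = mm \<gamma> \<delta> \<phi>"
      define \<Omega> where "\<Omega> = reward_space S D"
      define N where "N = nat \<lfloor>7 * real (card S) / \<phi>\<^sup>2 * (ln (1/\<gamma>) + ln (1/\<delta>))\<rfloor>"
      define xs where "xs = enum S"
      define p where "p = exp (-2 * (real m * \<phi> / 2)\<^sup>2 / real m)"
      have S: "finite S" using V unfolding valid_arms_def by simp
      have xs: "set xs = S" "distinct xs" using enum[OF S] xs_def by auto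
      have lxs: "length xs = n" using xs n_def distinct_card by metis
      have m0: "0 < m" using pbound(1)[OF g0 g1 d0 d1 p0 p1] unfolding m_def mm_def by simp
      have pb: "p \<le> \<gamma> * \<delta> / 16" using pbound(2)[OF g0 g1 d0 d1 p0 p1] unfolding p_def m_def mm_def by simp
      have p_nn: "0 \<le> p" unfolding p_def by simp
      have mN: "m * card S \<le> N"
      proof -
        have "real m * real (card S) \<le> 7 * real (card S) / \<phi>\<^sup>2 * (ln (1/\<gamma>) + ln (1/\<delta>))"
          using budget[OF g0 g1 d0 d1 p0 p1, of "card S"] unfolding m_def mm_def by simp
        thus ?thesis unfolding N_def by (intro le_nat_floor) simp
      qed
      define Z where "Z = (\<lambda>a (\<omega>::'a \<times> nat \<Rightarrow> real). \<Sum>j<m. \<omega> (a, j))"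
      have run_eq: "run (pol S m) \<omega> N [] = Some (sel xs (n div 10) {q \<in> S \<times> S. Z (fst q) \<omega> < Z (snd q) \<omega>})" for \<omega>
      proof -
        have "run (pol S m) \<omega> N (hist (enum S) m \<omega> 0)
           = Some (sel (enum S) (card S div 10) (rel_of S (emp (hist (enum S) m \<omega> (m * card S)))))"
          by (rule run_pol[OF S m0]) (use mN in auto)
        moreover have "hist (enum S) m \<omega> 0 = []" by (simp add: hist_def)
        moreover have "rel_of S (emp (hist (enum S) m \<omega> (m * card S))) = rel_of S (\<lambda>a. Z a \<omega>)"
        proof (rule rel_of_cong)
          fix a assume "a \<in> S"
          then obtain i where i: "i < length xs" "a = xs ! i" using xs(1) by (auto simp: in_set_conv_nth)
          show "emp (hist (enum S) m \<omega> (m * card S)) a = Z a \<omega>"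
            using emp_hist[OF xs(2) m0 i(1), of \<omega>] i lxs unfolding Z_def xs_def n_def by simp
        qed
        ultimately show ?thesis unfolding rel_of_def xs_def n_def by simp
      qed
      have part1: "\<forall>\<pi>\<in>set_pmf (alg S K \<gamma> \<delta> \<phi>). \<forall>\<omega>\<in>space \<Omega>. run \<pi> \<omega> N [] \<noteq> None"
        using run_eq unfolding alg_def m_def[symmetric] by simp
      have bij: "bij_betw \<sigma> {1..n} S" and mono: "\<And>i j. i \<in> {1..n} \<Longrightarrow> j \<in> {1..n} \<Longrightarrow> i \<le> j \<Longrightarrow>
          arm_mean (D (\<sigma> j)) \<le> arm_mean (D (\<sigma> i))"
        using sI unfolding sorted_indexing_def n_def by auto
      have inj: "inj_on \<sigma> {1..n}" using bij bij_betw_def by blast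
      have n_pos: "0 < n" using K1 K2 n_def by simp
      define mid where "mid = (n + K) div 2"
      have Kn: "K \<le> n" using K2 n_def by linarith
      have Kmid: "K \<le> mid" "mid \<le> n" using Kn unfolding mid_def by auto
      have mid56: "6 * real mid \<le> 5 * real n"
      proof -
        have "2 * mid \<le> n + K" unfolding mid_def by simp
        hence "2 * real mid \<le> real n + real K" by linarith
        thus ?thesis using K2 n_def by linarith
      qed
      define Top where "Top = \<sigma> ` {1..K}"
      define B where "B = \<sigma> ` {mid..n}"
      have TopS: "Top \<subseteq> S" using bij Kn unfolding Top_def bij_betw_def by auto
      have BS: "B \<subseteq> S" using bij K1 Kmid unfolding B_def bij_betw_def by auto
      have cTop: "card Top = K" unfolding Top_def
        by (subst card_image) (use inj_on_subset[OF inj, of "{1..K}"] Kn in auto)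
      have cB: "card B = n + 1 - mid" unfolding B_def
        by (subst card_image) (use inj_on_subset[OF inj, of "{mid..n}"] K1 Kmid in auto)
      define \<theta> where "\<theta> = arm_mean (D (\<sigma> K))"
      define t where "t = \<theta> - \<phi> / 2"
      have top_mean: "\<theta> \<le> arm_mean (D a)" if "a \<in> Top" for a
        using that mono Kn K1 unfolding Top_def \<theta>_def by auto
      have B_mean: "arm_mean (D b) \<le> \<theta> - \<phi>" if bB: "b \<in> B" for b
      proof -
        obtain i where i: "i \<in> {mid..n}" "b = \<sigma> i" using bB unfolding B_def by blast
        have "arm_mean (D b) \<le> arm_mean (D (\<sigma> mid))" using mono[of mid i] i K1 Kmid by auto
        thus ?thesis using gap unfolding \<theta>_def mid_def n_def by simp
      qed
      have aS: "\<sigma> 1 \<in> S" using bij n_pos unfolding bij_betw_def by auto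
      interpret P: prob_space \<Omega> using arm_facts(1)[OF V aS m0] \<Omega>_def by simp
      have Zm: "Z a \<in> borel_measurable \<Omega>" if "a \<in> S" for a
        using arm_facts(2)[OF V that m0] unfolding Z_def \<Omega>_def by simp
      have top_bad: "P.prob {\<omega>\<in>space \<Omega>. Z a \<omega> \<le> real m * t} \<le> p" if a: "a \<in> Top" for a
      proof -
        have aS': "a \<in> S" using a TopS by auto
        have "P.prob {\<omega>\<in>space \<Omega>. Z a \<omega> \<le> real m * t}
            \<le> P.prob {\<omega>\<in>space \<Omega>. Z a \<omega> \<le> real m * arm_mean (D a) - real m * \<phi> / 2}"
        proof (rule P.finite_measure_mono)
          have "real m * t \<le> real m * arm_mean (D a) - real m * \<phi> / 2"
          proof -
            have "real m * \<theta> \<le> real m * arm_mean (D a)"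
              using top_mean[OF a] by (intro mult_left_mono) simp_all
            thus ?thesis unfolding t_def by (simp add: algebra_simps)
          qed
          thus "{\<omega>\<in>space \<Omega>. Z a \<omega> \<le> real m * t}
            \<subseteq> {\<omega>\<in>space \<Omega>. Z a \<omega> \<le> real m * arm_mean (D a) - real m * \<phi> / 2}" by auto
          show "{\<omega>\<in>space \<Omega>. Z a \<omega> \<le> real m * arm_mean (D a) - real m * \<phi> / 2} \<in> P.events"
            using Zm[OF aS'] by measurable
        qed
        also have "\<dots> \<le> p"
          using arm_facts(3)[OF V aS' m0, of "real m * \<phi> / 2"] p0 unfolding Z_def \<Omega>_def p_def by simp
        finally show ?thesis .
      qed
      have B_bad: "P.prob {\<omega>\<in>space \<Omega>. real m * t < Z b \<omega>} \<le> p" if b: "b \<in> B" for b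
      proof -
        have bS': "b \<in> S" using b BS by auto
        have "P.prob {\<omega>\<in>space \<Omega>. real m * t < Z b \<omega>}
            \<le> P.prob {\<omega>\<in>space \<Omega>. Z b \<omega> \<ge> real m * arm_mean (D b) + real m * \<phi> / 2}"
        proof (rule P.finite_measure_mono)
          have "real m * arm_mean (D b) + real m * \<phi> / 2 \<le> real m * t"
          proof -
            have "real m * arm_mean (D b) \<le> real m * (\<theta> - \<phi>)"
              using B_mean[OF b] by (intro mult_left_mono) simp_all
            thus ?thesis unfolding t_def by (simp add: algebra_simps)
          qed
          thus "{\<omega>\<in>space \<Omega>. real m * t < Z b \<omega>}
            \<subseteq> {\<omega>\<in>space \<Omega>. Z b \<omega> \<ge> real m * arm_mean (D b) + real m * \<phi> / 2}" by auto
          show "{\<omega>\<in>space \<Omega>. Z b \<omega> \<ge> real m * arm_mean (D b) + real m * \<phi> / 2} \<in> P.events"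
            using Zm[OF bS'] by measurable
        qed
        also have "\<dots> \<le> p"
          using arm_facts(4)[OF V bS' m0, of "real m * \<phi> / 2"] p0 unfolding Z_def \<Omega>_def p_def by simp
        finally show ?thesis .
      qed
      define E1 where "E1 = {\<omega>\<in>space \<Omega>. \<gamma> * real K \<le> real (card {a\<in>Top. Z a \<omega> \<le> real m * t})}"
      define c2 where "c2 = real (card B) - real n / 10"
      define E2 where "E2 = {\<omega>\<in>space \<Omega>. c2 \<le> real (card {b\<in>B. real m * t < Z b \<omega>})}"
      have fTop: "finite Top" and fB: "finite B" using TopS BS S finite_subset by auto
      have E1m: "E1 \<in> P.events" unfolding E1_def
        by (rule sets_Collect_finite_pred[OF fTop]) (use Zm TopS in \<open>auto intro!: borel_measurable_le\<close>)
      have E2m: "E2 \<in> P.events" unfolding E2_def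
        by (rule sets_Collect_finite_pred[OF fB]) (use Zm BS in \<open>auto intro!: borel_measurable_less\<close>)
      have c2pos: "real n / 15 \<le> c2" unfolding c2_def cB using mid56 Kmid by (simp add: of_nat_diff)
      have PE1: "P.prob E1 \<le> p / \<gamma>"
      proof -
        have "P.prob E1 \<le> real (card Top) * p / (\<gamma> * real K)" unfolding E1_def
          by (rule P.count_markov[OF fTop]) (use Zm TopS top_bad g0 K1 in \<open>auto intro!: borel_measurable_le\<close>)
        also have "\<dots> = p / \<gamma>" using cTop K1 g0 by simp
        finally show ?thesis .
      qed
      have PE2: "P.prob E2 \<le> 15 * p"
      proof -
        have c2p: "0 < c2" using c2pos n_pos by (smt (verit) of_nat_0_less_iff divide_pos_pos)
        have "P.prob E2 \<le> real (card B) * p / c2" unfolding E2_def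
          by (rule P.count_markov[OF fB]) (use Zm BS B_bad c2p in \<open>auto intro!: borel_measurable_less\<close>)
        also have "\<dots> \<le> 15 * p"
        proof -
          have "real (card B) \<le> 15 * c2" using mid56 c2pos unfolding c2_def cB using Kmid
            by (simp add: of_nat_diff)
          hence "real (card B) * p \<le> 15 * c2 * p" using p_nn by (rule mult_right_mono)
          thus ?thesis using c2p by (simp add: divide_le_eq mult_ac)
        qed
        finally show ?thesis .
      qed
      define Phi where "Phi = (\<lambda>R. sel xs (n div 10) R \<subseteq> S \<and> card (sel xs (n div 10) R) = n div 10 \<and>
                    real (card (sel xs (n div 10) R \<inter> \<sigma> ` {1..K})) \<le> \<gamma> * real K)"
      define G where "G = {\<omega>\<in>space \<Omega>. \<exists>T. run (pol S m) \<omega> N [] = Some T \<and> T \<subseteq> S \<and>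
                    card T = card S div 10 \<and> real (card (T \<inter> \<sigma> ` {1..K})) \<le> \<gamma> * real K}"
      have G_eq: "G = {\<omega>\<in>space \<Omega>. Phi {q \<in> S \<times> S. Z (fst q) \<omega> < Z (snd q) \<omega>}}"
        unfolding G_def Phi_def run_eq n_def by simp
      have Gm: "G \<in> P.events" unfolding G_eq
        by (rule sets_Collect_finite_pred) (use Zm S in \<open>auto intro!: borel_measurable_less\<close>)
      have sub: "space \<Omega> - (E1 \<union> E2) \<subseteq> G"
      proof
        fix \<omega> assume w: "\<omega> \<in> space \<Omega> - (E1 \<union> E2)"
        define e where "e = (\<lambda>a. Z a \<omega>)"
        define T where "T = sel xs (n div 10) (rel_of S e)"
        have kn: "n div 10 \<le> card S" unfolding n_def by simp
        note sp = sel_props[OF S xs kn, where e=e, folded T_def]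
        have "T \<inter> Top \<subseteq> {a\<in>Top. e a \<le> real m * t}"
        proof (rule key_claim[OF sp(1) sp(2) S sp(3) BS])
          show "real (card {b \<in> B. real m * t < e b}) < real (card B) - real (n div 10)"
            using w unfolding E2_def c2_def e_def by (auto simp: real_of_nat_div)
        qed (simp add: n_def)
        hence "card (T \<inter> Top) \<le> card {a\<in>Top. e a \<le> real m * t}" using fTop by (intro card_mono) auto
        moreover have "real (card {a\<in>Top. e a \<le> real m * t}) < \<gamma> * real K"
          using w unfolding E1_def e_def by auto
        ultimately have "real (card (T \<inter> Top)) \<le> \<gamma> * real K" by linarith
        moreover have "rel_of S e = {q \<in> S \<times> S. Z (fst q) \<omega> < Z (snd q) \<omega>}"
          unfolding rel_of_def e_def ..
        ultimately show "\<omega> \<in> G" using sp w unfolding G_eq Phi_def T_def Top_def n_def by auto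
      qed
      have "1 - \<delta> \<le> 1 - (p / \<gamma> + 15 * p)"
      proof -
        have "p / \<gamma> \<le> \<delta> / 16" using pb g0 by (simp add: divide_le_eq mult.commute)
        moreover have "15 * p \<le> 15 * \<delta> / 32"
        proof -
          have "\<gamma> * \<delta> \<le> (1/2) * \<delta>" using g1 d0 by (intro mult_right_mono) simp_all
          thus ?thesis using pb by linarith
        qed
        ultimately show ?thesis using d0 by linarith
      qed
      also have "\<dots> \<le> 1 - P.prob (E1 \<union> E2)"
        using measure_Un_le[OF E1m E2m] PE1 PE2 by linarith
      also have "\<dots> = P.prob (space \<Omega> - (E1 \<union> E2))"
        using P.prob_compl[of "E1 \<union> E2"] E1m E2m by auto
      also have "\<dots> \<le> P.prob G" by (rule P.finite_measure_mono[OF sub Gm])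
      finally have part2: "1 - \<delta> \<le> P.prob G" .
      show "let N = nat \<lfloor>7 * real (card S) / \<phi>\<^sup>2 * (ln (1/\<gamma>) + ln (1/\<delta>))\<rfloor>;
            \<Omega> = reward_space S D
        in (\<forall>\<pi>\<in>set_pmf (alg S K \<gamma> \<delta> \<phi>). \<forall>\<omega>\<in>space \<Omega>. run \<pi> \<omega> N [] \<noteq> None) \<and>
           measure_pmf.expectation (alg S K \<gamma> \<delta> \<phi>)
             (\<lambda>\<pi>. measure \<Omega> {\<omega>\<in>space \<Omega>. \<exists>T. run \<pi> \<omega> N [] = Some T \<and> T \<subseteq> S \<and>
                    card T = card S div 10 \<and>
                    real (card (T \<inter> \<sigma> ` {1..K})) \<le> \<gamma> * real K})
             \<ge> 1 - \<delta>"
        unfolding Let_def N_def[symmetric] \<Omega>_def[symmetric]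
        using part1 part2 unfolding G_def alg_def m_def by simp
    qed
  qed
qed

end
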